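(* The complex surface $F=\{(z_1,z_2,z_3)\in\mathbb{C}^3: z_1+z_3+z_1z_2z_3=1\}$ is simply connected. *)

theory Defs
  imports "HOL-Analysis.Analysis"
begin

definition surfaceF :: "(complex \<times> complex \<times> complex) set" where
  "surfaceF = {(z1, z2, z3). z1 + z3 + z1 * z2 * z3 = 1}"

end

theory Submission
  imports Defs
begin

lemma vk_pieces:
  fixes U V :: "'a::real_normed_vector set"
  assumes oU: "openin (top_of_set (U \<union> V)) U" and oV: "openin (top_of_set (U \<union> V)) V"
    and p: "path p" "path_image p \<subseteq> U \<union> V"
  obtains N::nat where "N > 0" "\<And>k. k < N \<Longrightarrow> p ` {real k / N .. real (Suc k) / N} \<subseteq> U \<or> p ` {real k / N .. real (Suc k) / N} \<subseteq> V"
proof -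
  have cp: "continuous_on {0..1} p" using p path_def by blast
  have pf: "p \<in> {0..1} \<rightarrow> U \<union> V" using p(2) by (auto simp: path_image_def)
  have "openin (top_of_set {0..1}) ({0..1} \<inter> p -` U)"
    by (rule continuous_openin_preimage[OF cp pf oU])
  then obtain OU where OU: "open OU" "{0..1} \<inter> p -` U = {0..1} \<inter> OU" by (auto simp: openin_open)
  have "openin (top_of_set {0..1}) ({0..1} \<inter> p -` V)"
    by (rule continuous_openin_preimage[OF cp pf oV])
  then obtain OV where OV: "open OV" "{0..1} \<inter> p -` V = {0..1} \<inter> OV" by (auto simp: openin_open)
  have hU: "(p x \<in> U) = (x \<in> OU)" if x: "x \<in> {0..1}" for x
  proof -
    have "(x \<in> {0..1} \<inter> p -` U) = (x \<in> {0..1} \<inter> OU)" using OU(2) by simp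
    then show ?thesis using x by simp
  qed
  have hV: "(p x \<in> V) = (x \<in> OV)" if x: "x \<in> {0..1}" for x
  proof -
    have "(x \<in> {0..1} \<inter> p -` V) = (x \<in> {0..1} \<inter> OV)" using OV(2) by simp
    then show ?thesis using x by simp
  qed
  have cov: "{0..1::real} \<subseteq> \<Union>{OU, OV}"
  proof
    fix x::real assume x: "x \<in> {0..1}"
    then have "p x \<in> U \<or> p x \<in> V" using pf by auto
    then have "x \<in> OU \<or> x \<in> OV" using hU[OF x] hV[OF x] by simp
    then show "x \<in> \<Union>{OU, OV}" by simp
  qed
  have opn: "\<And>B. B \<in> {OU,OV} \<Longrightarrow> open B" using OU(1) OV(1) by auto
  obtain d where d: "0 < d" "\<And>T. \<lbrakk>T \<subseteq> {0..1}; diameter T < d\<rbrakk> \<Longrightarrow> \<exists>B \<in> {OU,OV}. T \<subseteq> B"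
    using Lebesgue_number_lemma[OF compact_Icc _ cov opn] by blast
  obtain N::nat where N: "N > 0" "inverse (real N) < d"
    using ex_inverse_of_nat_less[OF d(1)] by auto
  show ?thesis
  proof (rule that[OF N(1)])
    fix k assume k: "k < N"
    let ?T = "{real k / N .. real (Suc k) / N}"
    have sub: "?T \<subseteq> {0..1}"
    proof
      fix x assume "x \<in> ?T"
      then have a: "real k / N \<le> x" "x \<le> real (Suc k) / N" by auto
      have b: "real (Suc k) / N \<le> 1" using k by simp
      have c: "0 \<le> real k / N" by simp
      show "x \<in> {0..1}" unfolding atLeastAtMost_iff using a b c by linarith
    qed
    have le: "real k / N \<le> real (Suc k) / N" using N by (simp add: divide_right_mono)
    have "diameter ?T = real (Suc k) / N - real k / N" using le by simp
    also have "\<dots> = inverse (real N)" using N(1) by (simp add: field_simps)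
    finally have "diameter ?T < d" using N(2) by simp
    then obtain B where B: "B \<in> {OU,OV}" "?T \<subseteq> B" using d(2)[OF sub] by blast
    show "p ` ?T \<subseteq> U \<or> p ` ?T \<subseteq> V"
    proof (cases "B = OU")
      case True
      then have "B = OU" .
      have "p ` ?T \<subseteq> U"
      proof
        fix y assume "y \<in> p ` ?T"
        then obtain x where x: "x \<in> ?T" "y = p x" by blast
        have x01: "x \<in> {0..1}" using sub x(1) by blast
        have "x \<in> B" using B(2) x(1) by blast
        then have "x \<in> OU" using \<open>B = OU\<close> by simp
        then show "y \<in> U" using hU[OF x01] x(2) by simp
      qed
      then show ?thesis by simp
    next
      case False
      then have "B = OV" using B by simp
      have "p ` ?T \<subseteq> V"
      proof
        fix y assume "y \<in> p ` ?T"
        then obtain x where x: "x \<in> ?T" "y = p x" by blast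
        have x01: "x \<in> {0..1}" using sub x(1) by blast
        have "x \<in> B" using B(2) x(1) by blast
        then have "x \<in> OV" using \<open>B = OV\<close> by simp
        then show "y \<in> V" using hV[OF x01] x(2) by simp
      qed
      then show ?thesis by simp
    qed
  qed
qed

lemma vk_helper:
  fixes U V W :: "'a::real_normed_vector set"
  assumes W: "simply_connected W" "U \<inter> V \<subseteq> W" and pc: "path_connected (U \<inter> V)"
    and r: "path r" "path_image r \<subseteq> W" "pathstart r \<in> U \<inter> V" "pathfinish r \<in> U \<inter> V"
  obtains s where "path s" "path_image s \<subseteq> U \<inter> V" "pathstart s = pathstart r" "pathfinish s = pathfinish r"
    "homotopic_paths W r s"
proof -
  obtain s where s: "path s" "path_image s \<subseteq> U \<inter> V" "pathstart s = pathstart r" "pathfinish s = pathfinish r"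
    using pc r(3,4) unfolding path_connected_def by blast
  have "homotopic_paths W r s"
    using W(1) unfolding simply_connected_eq_homotopic_paths
    using r(1,2) s W(2) by blast
  then show ?thesis using that s by blast
qed

lemma vk_core:
  fixes U V :: "'a::real_normed_vector set"
  assumes oU: "openin (top_of_set (U \<union> V)) U" and oV: "openin (top_of_set (U \<union> V)) V"
    and sU: "simply_connected U" and sV: "simply_connected V"
    and pc: "path_connected (U \<inter> V)"
    and p: "path p" "path_image p \<subseteq> U \<union> V" "pathstart p \<in> U \<inter> V" "pathfinish p \<in> U \<inter> V"
  shows "\<exists>q. path q \<and> path_image q \<subseteq> U \<inter> V \<and> pathstart q = pathstart p \<and> pathfinish q = pathfinish p
              \<and> homotopic_paths (U \<union> V) p q"
proof -
  let ?X = "U \<union> V"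
  obtain N::nat where N: "N > 0" and pieces: "\<And>k. k < N \<Longrightarrow> p ` {real k / N .. real (Suc k) / N} \<subseteq> U \<or> p ` {real k / N .. real (Suc k) / N} \<subseteq> V"
    using vk_pieces[OF oU oV p(1,2)] by blast
  define Q where "Q k \<longleftrightarrow> (\<exists>q1 q2 W. (W = U \<or> W = V) \<and> path q1 \<and> path_image q1 \<subseteq> U \<inter> V \<and> pathstart q1 = pathstart p
      \<and> path q2 \<and> path_image q2 \<subseteq> W \<and> pathstart q2 = pathfinish q1 \<and> pathfinish q2 = p (real k / N)
      \<and> homotopic_paths ?X (subpath 0 (real k / N) p) (q1 +++ q2))" for k
  have simW: "simply_connected W" if "W = U \<or> W = V" for W using that sU sV by blast
  have subW: "U \<inter> V \<subseteq> W" "W \<subseteq> ?X" if "W = U \<or> W = V" for W using that by blast+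
  have "Q k" if "k \<le> N" for k
    using that
  proof (induction k)
    case 0
    let ?a = "pathstart p"
    have a: "?a \<in> U" using p(3) by blast
    have sp: "subpath 0 0 p = linepath ?a ?a"
      by (simp add: subpath_def linepath_def pathstart_def fun_eq_iff algebra_simps)
    have "homotopic_paths ?X (linepath ?a ?a) (linepath ?a ?a +++ linepath ?a ?a)"
      using homotopic_paths_lid[of "linepath ?a ?a" ?X] a
      by (simp add: homotopic_paths_sym)
    then show ?case unfolding Q_def
      apply (rule_tac x="linepath ?a ?a" in exI, rule_tac x="linepath ?a ?a" in exI, rule_tac x=U in exI)
      using a p(3) sp by (simp add: pathstart_def)
  next
    case (Suc k)
    then have kN: "k < N" by simp
    from Suc.IH kN obtain q1 q2 W where W: "W = U \<or> W = V" and q1: "path q1" "path_image q1 \<subseteq> U \<inter> V" "pathstart q1 = pathstart p"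
      and q2: "path q2" "path_image q2 \<subseteq> W" "pathstart q2 = pathfinish q1" "pathfinish q2 = p (real k / N)"
      and hq: "homotopic_paths ?X (subpath 0 (real k / N) p) (q1 +++ q2)"
      unfolding Q_def by auto
    let ?u = "real k / N" and ?v = "real (Suc k) / N"
    have u01: "?u \<in> {0..1}" using kN by simp
    have v01: "?v \<in> {0..1}" using kN by simp
    have uv: "?u \<le> ?v" using N by (simp add: divide_right_mono)
    let ?r = "subpath ?u ?v p"
    have r: "path ?r" using p(1) u01 v01 by (simp add: path_subpath)
    have rim: "path_image ?r = p ` {?u..?v}" using uv by (simp add: path_image_subpath)
    obtain W' where W': "W' = U \<or> W' = V" and rW': "path_image ?r \<subseteq> W'"
      using pieces[OF kN] rim by metis
    have rX: "path_image ?r \<subseteq> ?X" using rW' W' by blast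
    have sub0u: "path (subpath 0 ?u p)" "path_image (subpath 0 ?u p) \<subseteq> ?X"
      using p(1,2) u01 path_subpath[of p 0 ?u] path_image_subpath_subset[of 0 ?u p] by auto
    have j1: "homotopic_paths ?X (subpath 0 ?v p) (subpath 0 ?u p +++ ?r)"
      using homotopic_join_subpaths1[OF p(1,2), of 0 ?u ?v] u01 v01 uv
      by (simp add: homotopic_paths_sym)
    have j2: "homotopic_paths ?X (subpath 0 ?u p +++ ?r) ((q1 +++ q2) +++ ?r)"
      using homotopic_paths_join[OF hq, of ?r ?r] r rX by simp
    have q1X: "path_image q1 \<subseteq> ?X" using q1 by blast
    have q2X: "path_image q2 \<subseteq> ?X" using q2 W by blast
    have rs: "pathstart ?r = pathfinish q2" using q2(4) by simp
    show ?case
    proof (cases "W' = W")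
      case True
      have "homotopic_paths ?X ((q1 +++ q2) +++ ?r) (q1 +++ (q2 +++ ?r))"
        using homotopic_paths_assoc[of q1 ?X q2 ?r] q1 q2 q1X q2X r rX rs
        by (simp add: homotopic_paths_sym)
      then have "homotopic_paths ?X (subpath 0 ?v p) (q1 +++ (q2 +++ ?r))"
        using j1 j2 homotopic_paths_trans by blast
      moreover have "path (q2 +++ ?r)" using q2 r rs by simp
      moreover have "path_image (q2 +++ ?r) \<subseteq> W"
        using q2 rW' True path_image_join_subset[of q2 ?r] by blast
      ultimately show ?thesis unfolding Q_def
        apply (rule_tac x=q1 in exI, rule_tac x="q2 +++ ?r" in exI, rule_tac x=W in exI)
        using q1 q2 W by simp
    next
      case False
      have mid: "p ?u \<in> U \<inter> V"
      proof -
        have "p ?u \<in> W" using q2(2,4) pathfinish_in_path_image[of q2] by auto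
        moreover have "p ?u \<in> W'"
        proof -
          have "pathstart ?r \<in> path_image ?r" by (rule pathstart_in_path_image)
          then have "p ?u \<in> path_image ?r" by simp
          then show ?thesis using rW' by blast
        qed
        ultimately show ?thesis using W W' False by (elim disjE) auto
      qed
      have st: "pathstart q2 \<in> U \<inter> V" using q1(2) q2(3) pathfinish_in_path_image[of q1] by auto
      obtain s where s: "path s" "path_image s \<subseteq> U \<inter> V" "pathstart s = pathstart q2" "pathfinish s = pathfinish q2"
        "homotopic_paths W q2 s"
        using vk_helper[OF simW[OF W] subW(1)[OF W] pc q2(1,2) st] mid q2(4) by auto
      have hs: "homotopic_paths ?X q2 s" using homotopic_paths_subset[OF s(5) subW(2)[OF W]] .
      have "homotopic_paths ?X (q1 +++ q2) (q1 +++ s)"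
        using homotopic_paths_join[of ?X q1 q1 q2 s] hs q1 q1X q2(3) by simp
      then have "homotopic_paths ?X ((q1 +++ q2) +++ ?r) ((q1 +++ s) +++ ?r)"
        using homotopic_paths_join[of ?X "q1 +++ q2" "q1 +++ s" ?r ?r] r rX rs by simp
      then have "homotopic_paths ?X (subpath 0 ?v p) ((q1 +++ s) +++ ?r)"
        using j1 j2 homotopic_paths_trans by blast
      moreover have "path (q1 +++ s)" using q1 s q2(3) by simp
      moreover have "path_image (q1 +++ s) \<subseteq> U \<inter> V"
        using q1 s path_image_join_subset[of q1 s] by blast
      ultimately show ?thesis unfolding Q_def
        apply (rule_tac x="q1 +++ s" in exI, rule_tac x="?r" in exI, rule_tac x=W' in exI)
        using q1 s W' rW' r q2(4) by simp
    qed
  qed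
  then have "Q N" by simp
  then obtain q1 q2 W where W: "W = U \<or> W = V" and q1: "path q1" "path_image q1 \<subseteq> U \<inter> V" "pathstart q1 = pathstart p"
      and q2: "path q2" "path_image q2 \<subseteq> W" "pathstart q2 = pathfinish q1" "pathfinish q2 = p (real N / N)"
      and hq: "homotopic_paths ?X (subpath 0 (real N / N) p) (q1 +++ q2)"
    unfolding Q_def by blast
  have NN: "real N / N = 1" using N by simp
  have hq': "homotopic_paths ?X p (q1 +++ q2)" using hq NN by simp
  have fin: "pathfinish q2 = pathfinish p" using q2(4) NN by (simp add: pathfinish_def)
  have st: "pathstart q2 \<in> U \<inter> V" using q1(2) q2(3) pathfinish_in_path_image[of q1] by auto
  obtain s where s: "path s" "path_image s \<subseteq> U \<inter> V" "pathstart s = pathstart q2" "pathfinish s = pathfinish q2"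
    "homotopic_paths W q2 s"
    using vk_helper[OF simW[OF W] subW(1)[OF W] pc q2(1,2) st] fin p(4) by auto
  have hs: "homotopic_paths ?X q2 s" using homotopic_paths_subset[OF s(5) subW(2)[OF W]] .
  have q1X: "path_image q1 \<subseteq> ?X" using q1 by blast
  have "homotopic_paths ?X (q1 +++ q2) (q1 +++ s)"
    using homotopic_paths_join[of ?X q1 q1 q2 s] hs q1 q1X q2(3) by simp
  then have "homotopic_paths ?X p (q1 +++ s)" using hq' homotopic_paths_trans by blast
  moreover have "path (q1 +++ s)" using q1 s q2(3) by simp
  moreover have "path_image (q1 +++ s) \<subseteq> U \<inter> V"
    using q1 s path_image_join_subset[of q1 s] by blast
  ultimately show ?thesis
    apply (rule_tac x="q1 +++ s" in exI)
    using q1 s fin q2(3) by simp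
qed


lemma vk_simply_connected:
  fixes U V :: "'a::real_normed_vector set"
  assumes oU: "openin (top_of_set (U \<union> V)) U" and oV: "openin (top_of_set (U \<union> V)) V"
    and sU: "simply_connected U" and sV: "simply_connected V"
    and pc: "path_connected (U \<inter> V)" and ne: "U \<inter> V \<noteq> {}"
  shows "simply_connected (U \<union> V)"
proof -
  let ?X = "U \<union> V"
  have pX: "path_connected ?X"
    by (rule path_connected_Un[OF simply_connected_imp_path_connected[OF sU] simply_connected_imp_path_connected[OF sV] ne])
  obtain c where c: "c \<in> U \<inter> V" using ne by blast
  have cX: "c \<in> ?X" using c by blast
  show ?thesis
    unfolding simply_connected_eq_contractible_loop_some
  proof (intro conjI pX allI impI)
    fix p assume p: "path p \<and> path_image p \<subseteq> ?X \<and> pathfinish p = pathstart p"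
    have a: "pathstart p \<in> ?X" using p pathstart_in_path_image by blast
    obtain g where g: "path g" "path_image g \<subseteq> ?X" "pathstart g = pathstart p" "pathfinish g = c"
      using pX a cX unfolding path_connected_def by blast
    let ?L = "reversepath g +++ p +++ g"
    have hL: "homotopic_loops ?X ?L p"
      using homotopic_loops_conjugate[of "reversepath g" p ?X] g p by simp
    have Lp: "path ?L" "path_image ?L \<subseteq> ?X" "pathstart ?L = c" "pathfinish ?L = c"
      using g p by (auto simp: path_image_join)
    obtain q where q: "path q" "path_image q \<subseteq> U \<inter> V" "pathstart q = c" "pathfinish q = c"
      "homotopic_paths ?X ?L q"
      using vk_core[OF oU oV sU sV pc Lp(1,2)] Lp(3,4) c by auto
    have "homotopic_loops U q (linepath c c)"
      using sU q c unfolding simply_connected_eq_contractible_loop_any by blast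
    then have h1: "homotopic_loops ?X q (linepath c c)" by (rule homotopic_loops_subset) blast
    have h2: "homotopic_loops ?X ?L q"
      by (rule homotopic_paths_imp_homotopic_loops[OF q(5)]) (use Lp q in auto)
    have "homotopic_loops ?X p (linepath c c)"
      using homotopic_loops_trans[OF homotopic_loops_sym[OF hL] homotopic_loops_trans[OF h2 h1]] .
    then show "\<exists>a. a \<in> ?X \<and> homotopic_loops ?X p (linepath a a)" using cX by blast
  qed
qed

lemma of_real_img_iff: "(z \<in> complex_of_real ` S) = (Im z = 0 \<and> Re z \<in> S)"
proof
  assume "z \<in> complex_of_real ` S" then show "Im z = 0 \<and> Re z \<in> S" by auto
next
  assume a: "Im z = 0 \<and> Re z \<in> S"
  then have "z = complex_of_real (Re z)" by (simp add: complex_eq_iff)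
  then show "z \<in> complex_of_real ` S" using a by blast
qed

lemma scale_ge1:
  assumes "w \<notin> complex_of_real ` {1..}" "0 \<le> t" "t \<le> 1"
  shows "complex_of_real t * w \<notin> complex_of_real ` {1..}"
proof
  assume "complex_of_real t * w \<in> complex_of_real ` {1..}"
  then have h: "t * Im w = 0" "1 \<le> t * Re w" by (auto simp: of_real_img_iff)
  have "t \<noteq> 0"
  proof
    assume "t = 0" then show False using h(2) by simp
  qed
  then have "Im w = 0" using h(1) by simp
  moreover have "1 \<le> Re w"
  proof (rule ccontr)
    assume "\<not> 1 \<le> Re w"
    then have "t * Re w < 1"
    proof (cases "Re w \<le> 0")
      case True
      then have "t * Re w \<le> 0" using mult_nonneg_nonpos[OF assms(2)] by blast
      then show ?thesis by linarith
    next
      case False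
      then have "t * Re w \<le> 1 * Re w" using mult_right_mono[OF assms(3)] by simp
      then show ?thesis using \<open>\<not> 1 \<le> Re w\<close> by linarith
    qed
    then show False using h(2) by linarith
  qed
  ultimately have "w \<in> complex_of_real ` {1..}" by (simp add: of_real_img_iff)
  then show False using assms(1) by blast
qed

lemma scale_le0:
  assumes "1 + w \<notin> complex_of_real ` {..0}" "0 \<le> t" "t \<le> 1"
  shows "1 + complex_of_real t * w \<notin> complex_of_real ` {..0}"
proof
  assume "1 + complex_of_real t * w \<in> complex_of_real ` {..0}"
  then have h: "t * Im w = 0" "1 + t * Re w \<le> 0" by (auto simp: of_real_img_iff)
  have "t \<noteq> 0"
  proof
    assume "t = 0" then show False using h(2) by simp
  qed
  then have "Im w = 0" using h(1) by simp
  moreover have "1 + Re w \<le> 0"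
  proof (rule ccontr)
    assume "\<not> 1 + Re w \<le> 0"
    then have "t * Re w > -1"
    proof (cases "Re w \<le> 0")
      case True
      then have "1 * Re w \<le> t * Re w" using mult_right_mono_neg[OF assms(3)] by blast
      then show ?thesis using \<open>\<not> 1 + Re w \<le> 0\<close> by linarith
    next
      case False
      then have "0 \<le> t * Re w" using assms(2) by simp
      then show ?thesis by linarith
    qed
    then show False using h(2) by linarith
  qed
  ultimately have "1 + w \<in> complex_of_real ` {..0}" by (simp add: of_real_img_iff)
  then show False using assms(1) by blast
qed

lemma mem_F: "((x,b,y) \<in> surfaceF) = (x + y + x*b*y = 1)"
  by (simp add: surfaceF_def)

definition setU :: "(complex \<times> complex \<times> complex) set" where
  "setU = {z \<in> surfaceF. fst z \<notin> complex_of_real ` {..0}}"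
definition setV :: "(complex \<times> complex \<times> complex) set" where
  "setV = {z \<in> surfaceF. fst z \<notin> complex_of_real ` {1..} \<and> 1 + fst (snd z) * fst z \<notin> complex_of_real ` {..0}}"
definition setW :: "(complex \<times> complex \<times> complex) set" where
  "setW = {z \<in> surfaceF. fst z \<notin> complex_of_real ` {0..} \<and> snd (snd z) \<notin> complex_of_real ` {0..}}"

lemma one_minus_slit: "(1 - w \<in> complex_of_real ` {..0}) = (w \<in> complex_of_real ` {1..})"
  by (auto simp: of_real_img_iff)

lemma slit_flip: "(1 - x \<in> complex_of_real ` {1..}) = (x \<in> complex_of_real ` {..0})"
  by (auto simp: of_real_img_iff)

lemma closed_slit: "closed (complex_of_real ` S)" if "closed S"
proof -
  have "complex_of_real ` S = {z. Im z = 0} \<inter> Re -` S"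
    by (auto simp: of_real_img_iff)
  moreover have "closed ({z::complex. Im z = 0} \<inter> Re -` S)"
    by (intro closed_Int closed_vimage that continuous_intros closed_Collect_eq)
  ultimately show ?thesis by simp
qed

lemma open_not_slit:
  fixes f :: "complex \<times> complex \<times> complex \<Rightarrow> complex"
  assumes "\<And>x. continuous (at x) f" "closed S"
  shows "open {z. f z \<notin> complex_of_real ` S}"
proof -
  have "closed (f -` (complex_of_real ` S))"
    by (rule continuous_closed_vimage[OF closed_slit[OF assms(2)] assms(1)])
  moreover have "{z. f z \<notin> complex_of_real ` S} = - (f -` (complex_of_real ` S))" by auto
  ultimately show ?thesis by (simp add: open_Compl)
qed

lemma starlike_U': "starlike {p::complex \<times> complex. fst p * snd p \<notin> complex_of_real ` {1..}}"
  unfolding starlike_def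
proof (intro bexI ballI subsetI)
  show "(0::complex\<times>complex) \<in> {p. fst p * snd p \<notin> complex_of_real ` {1..}}"
    by (auto simp: of_real_img_iff)
  fix x z assume x: "x \<in> {p::complex\<times>complex. fst p * snd p \<notin> complex_of_real ` {1..}}"
    and z: "z \<in> closed_segment 0 x"
  then obtain u::real where u: "0 \<le> u" "u \<le> 1" "z = u *\<^sub>R x" by (auto simp: closed_segment_def)
  have "fst z * snd z = complex_of_real (u*u) * (fst x * snd x)"
    using u(3) by (simp add: scaleR_conv_of_real algebra_simps)
  moreover have "0 \<le> u*u" "u*u \<le> 1" using u by (auto simp: mult_le_one)
  ultimately show "z \<in> {p. fst p * snd p \<notin> complex_of_real ` {1..}}"
    using scale_ge1[of "fst x * snd x" "u*u"] x by simp
qed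

lemma starlike_V': "starlike {p::complex \<times> complex. fst p \<notin> complex_of_real ` {1..} \<and> 1 + snd p * fst p \<notin> complex_of_real ` {..0}}"
  unfolding starlike_def
proof (intro bexI ballI subsetI)
  show "(0::complex\<times>complex) \<in> {p. fst p \<notin> complex_of_real ` {1..} \<and> 1 + snd p * fst p \<notin> complex_of_real ` {..0}}"
    by (auto simp: of_real_img_iff)
  fix x z assume x: "x \<in> {p::complex\<times>complex. fst p \<notin> complex_of_real ` {1..} \<and> 1 + snd p * fst p \<notin> complex_of_real ` {..0}}"
    and z: "z \<in> closed_segment 0 x"
  then obtain u::real where u: "0 \<le> u" "u \<le> 1" "z = u *\<^sub>R x" by (auto simp: closed_segment_def)
  have e1: "fst z = complex_of_real u * fst x" using u(3) by (simp add: scaleR_conv_of_real)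
  have e2: "snd z * fst z = complex_of_real (u*u) * (snd x * fst x)"
    using u(3) by (simp add: scaleR_conv_of_real algebra_simps)
  have "0 \<le> u*u" "u*u \<le> 1" using u by (auto simp: mult_le_one)
  then show "z \<in> {p. fst p \<notin> complex_of_real ` {1..} \<and> 1 + snd p * fst p \<notin> complex_of_real ` {..0}}"
    using scale_ge1[of "fst x" u] scale_le0[of "snd x * fst x" "u*u"] x u e1 e2 by simp
qed

lemma sc_U: "simply_connected setU"
proof -
  let ?S = "{p::complex \<times> complex. fst p * snd p \<notin> complex_of_real ` {1..}}"
  let ?h = "\<lambda>p::complex\<times>complex. (1 - fst p * snd p, (fst p - 1) / (1 - fst p * snd p), snd p)"
  let ?k = "\<lambda>z::complex\<times>complex\<times>complex. (1 + fst (snd z) * fst z, snd (snd z))"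
  have nz: "1 - fst p * snd p \<noteq> 0" if "p \<in> ?S" for p
  proof
    assume "1 - fst p * snd p = 0"
    then have "fst p * snd p = 1" by simp
    then have "fst p * snd p \<in> complex_of_real ` {1..}" by (simp add: of_real_img_iff)
    then show False using that by blast
  qed
  show ?thesis
  proof (rule simply_connected_retraction_gen[of ?S ?h _ ?k])
    show "simply_connected ?S" by (rule starlike_imp_simply_connected[OF starlike_U'])
    show "continuous_on ?S ?h" using nz by (intro continuous_intros) auto
    show "continuous_on setU ?k" by (intro continuous_intros)
    show "?k \<in> setU \<rightarrow> ?S"
    proof
      fix z assume z: "z \<in> setU"
      obtain x b y where zz: "z = (x,b,y)" by (cases z) auto
      have F: "x + y + x*b*y = 1" and xs: "x \<notin> complex_of_real ` {..0}"
        using z zz by (auto simp: setU_def mem_F)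
      have "(1 + b*x) * y - (1 - x) = (x + y + x*b*y) - 1" by (simp add: algebra_simps)
      then have "(1 + b*x) * y = 1 - x" using F by simp
      moreover have "1 - x \<notin> complex_of_real ` {1..}" using xs slit_flip by simp
      ultimately show "?k z \<in> ?S" using zz by simp
    qed
    show "?h (?k z) = z" if z: "z \<in> setU" for z
    proof -
      obtain x b y where zz: "z = (x,b,y)" by (cases z) auto
      have F: "x + y + x*b*y = 1" and xs: "x \<notin> complex_of_real ` {..0}"
        using z zz by (auto simp: setU_def mem_F)
      have x0: "x \<noteq> 0" using xs by (auto simp: of_real_img_iff)
      have e0: "1 - (1 + b*x) * y - x = 1 - (x + y + x*b*y)" by (simp add: algebra_simps)
      then have e: "1 - (1 + b*x) * y = x" using F by simp
      show ?thesis using zz e x0 by simp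
    qed
    show "?h ` ?S = setU"
    proof
      show "?h ` ?S \<subseteq> setU"
      proof
        fix z assume "z \<in> ?h ` ?S"
        then obtain A y where p: "(A,y) \<in> ?S" "z = ?h (A,y)" by auto
        have n: "1 - A*y \<noteq> 0" using nz[OF p(1)] by simp
        have "(1 - A*y) + y + (1 - A*y) * ((A - 1) / (1 - A*y)) * y = 1"
          using n by (simp add: field_simps)
        moreover have "1 - A*y \<notin> complex_of_real ` {..0}" using p(1) one_minus_slit by simp
        ultimately have "?h (A,y) \<in> setU" unfolding setU_def by (simp add: mem_F)
        then show "z \<in> setU" using p(2) by simp
      qed
      show "setU \<subseteq> ?h ` ?S"
      proof
        fix z assume z: "z \<in> setU"
        obtain x b y where zz: "z = (x,b,y)" by (cases z) auto
        have F: "x + y + x*b*y = 1" and xs: "x \<notin> complex_of_real ` {..0}"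
          using z zz by (auto simp: setU_def mem_F)
        have x0: "x \<noteq> 0" using xs by (auto simp: of_real_img_iff)
        have e0: "1 - (1 + b*x) * y - x = 1 - (x + y + x*b*y)" by (simp add: algebra_simps)
      then have e: "1 - (1 + b*x) * y = x" using F by simp
        have mem: "(1 + b*x, y) \<in> ?S" using e xs one_minus_slit[of "(1 + b*x) * y"] by simp
        have eq: "?h (1 + b*x, y) = z" using zz e x0 by simp
        show "z \<in> ?h ` ?S" by (rule rev_image_eqI[OF mem]) (use eq in simp)
      qed
    qed
  qed
qed


lemma slit_nz: "w \<notin> complex_of_real ` {..0} \<Longrightarrow> w \<noteq> 0"
  by (auto simp: of_real_img_iff)

lemma slit_nz2: "w \<notin> complex_of_real ` {0..} \<Longrightarrow> w \<noteq> 0"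
  by (auto simp: of_real_img_iff)

lemma sc_V: "simply_connected setV"
proof -
  let ?S = "{p::complex \<times> complex. fst p \<notin> complex_of_real ` {1..} \<and> 1 + snd p * fst p \<notin> complex_of_real ` {..0}}"
  let ?h = "\<lambda>p::complex\<times>complex. (fst p, snd p, (1 - fst p) / (1 + snd p * fst p))"
  let ?k = "\<lambda>z::complex\<times>complex\<times>complex. (fst z, fst (snd z))"
  have nz: "1 + snd p * fst p \<noteq> 0" if "p \<in> ?S" for p using that slit_nz by blast
  have yeq: "y = (1 - x) / (1 + b*x)" if F: "x + y + x*b*y = 1" and n: "1 + b*x \<noteq> 0" for x b y :: complex
  proof -
    have "(1 + b*x) * y - (1 - x) = (x + y + x*b*y) - 1" by (simp add: algebra_simps)
    then have "(1 + b*x) * y = 1 - x" using F by simp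
    then show ?thesis using n by (simp add: eq_divide_eq mult.commute)
  qed
  show ?thesis
  proof (rule simply_connected_retraction_gen[of ?S ?h _ ?k])
    show "simply_connected ?S" by (rule starlike_imp_simply_connected[OF starlike_V'])
    show "continuous_on ?S ?h" using nz by (intro continuous_intros) auto
    show "continuous_on setV ?k" by (intro continuous_intros)
    show "?k \<in> setV \<rightarrow> ?S" by (auto simp: setV_def)
    show "?h (?k z) = z" if z: "z \<in> setV" for z
    proof -
      obtain x b y where zz: "z = (x,b,y)" by (cases z) auto
      have F: "x + y + x*b*y = 1" and xs: "1 + b*x \<notin> complex_of_real ` {..0}"
        using z zz by (auto simp: setV_def mem_F)
      show ?thesis using zz yeq[OF F slit_nz[OF xs]] by simp
    qed
    show "?h ` ?S = setV"
    proof
      show "?h ` ?S \<subseteq> setV"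
      proof
        fix z assume "z \<in> ?h ` ?S"
        then obtain x b where p: "(x,b) \<in> ?S" "z = ?h (x,b)" by auto
        have n: "1 + b*x \<noteq> 0" using nz[OF p(1)] by simp
        have e: "(1 + b*x) * ((1 - x) / (1 + b*x)) = 1 - x" using n by simp
        have g: "\<And>y. x + y + x * b * y = x + (1 + b*x) * y" by (simp add: algebra_simps)
        have "x + (1 - x) / (1 + b*x) + x * b * ((1 - x) / (1 + b*x)) = x + (1 + b*x) * ((1 - x) / (1 + b*x))"
          by (rule g)
        also have "\<dots> = x + (1 - x)" by (simp only: e)
        also have "\<dots> = 1" by simp
        finally have "x + (1 - x) / (1 + b*x) + x * b * ((1 - x) / (1 + b*x)) = 1" .
        then have "?h (x,b) \<in> setV" using p(1) unfolding setV_def by (simp add: mem_F)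
        then show "z \<in> setV" using p(2) by simp
      qed
      show "setV \<subseteq> ?h ` ?S"
      proof
        fix z assume z: "z \<in> setV"
        obtain x b y where zz: "z = (x,b,y)" by (cases z) auto
        have F: "x + y + x*b*y = 1" and xs: "1 + b*x \<notin> complex_of_real ` {..0}"
          and x1: "x \<notin> complex_of_real ` {1..}"
          using z zz by (auto simp: setV_def mem_F)
        have mem: "(x, b) \<in> ?S" using xs x1 by simp
        have eq: "?h (x, b) = z" using zz yeq[OF F slit_nz[OF xs]] by simp
        show "z \<in> ?h ` ?S" by (rule rev_image_eqI[OF mem]) (use eq in simp)
      qed
    qed
  qed
qed

lemma beq: "b = (1 - x - y) / (x*y)" if F: "x + y + x*b*y = 1" and n: "x \<noteq> 0" "y \<noteq> 0" for x b y :: complex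
proof -
  have "x*b*y - (1 - x - y) = (x + y + x*b*y) - 1" by (simp add: algebra_simps)
  then have "x*b*y = 1 - x - y" using F by simp
  then show ?thesis using n by (simp add: eq_divide_eq mult.commute mult.left_commute)
qed

lemma hW_in_F: "x + y + x * ((1 - x - y) / (x*y)) * y = 1" if "x \<noteq> 0" "y \<noteq> 0" for x y :: complex
  using that by (simp add: field_simps)

lemma sc_W: "simply_connected setW"
proof -
  let ?Sr = "- complex_of_real ` {0..}"
  let ?S = "?Sr \<times> ?Sr"
  let ?h = "\<lambda>p::complex\<times>complex. (fst p, (1 - fst p - snd p) / (fst p * snd p), snd p)"
  let ?k = "\<lambda>z::complex\<times>complex\<times>complex. (fst z, snd (snd z))"
  show ?thesis
  proof (rule simply_connected_retraction_gen[of ?S ?h _ ?k])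
    show "simply_connected ?S"
      by (intro simply_connected_Times simply_connected_slotted_complex_plane_right)
    show "continuous_on ?S ?h" using slit_nz2 by (intro continuous_intros) auto
    show "continuous_on setW ?k" by (intro continuous_intros)
    show "?k \<in> setW \<rightarrow> ?S" by (auto simp: setW_def)
    show "?h (?k z) = z" if z: "z \<in> setW" for z
    proof -
      obtain x b y where zz: "z = (x,b,y)" by (cases z) auto
      have F: "x + y + x*b*y = 1" and xs: "x \<notin> complex_of_real ` {0..}" "y \<notin> complex_of_real ` {0..}"
        using z zz by (auto simp: setW_def mem_F)
      show ?thesis using zz beq[OF F slit_nz2[OF xs(1)] slit_nz2[OF xs(2)]] by simp
    qed
    show "?h ` ?S = setW"
    proof
      show "?h ` ?S \<subseteq> setW"
      proof
        fix z assume "z \<in> ?h ` ?S"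
        then obtain x y where p: "(x,y) \<in> ?S" "z = ?h (x,y)" by auto
        have xs: "x \<notin> complex_of_real ` {0..}" "y \<notin> complex_of_real ` {0..}" using p(1) by auto
        have "?h (x,y) \<in> setW" unfolding setW_def
          using xs hW_in_F[OF slit_nz2[OF xs(1)] slit_nz2[OF xs(2)]] by (simp add: mem_F)
        then show "z \<in> setW" using p(2) by simp
      qed
      show "setW \<subseteq> ?h ` ?S"
      proof
        fix z assume z: "z \<in> setW"
        obtain x b y where zz: "z = (x,b,y)" by (cases z) auto
        have F: "x + y + x*b*y = 1" and xs: "x \<notin> complex_of_real ` {0..}" "y \<notin> complex_of_real ` {0..}"
          using z zz by (auto simp: setW_def mem_F)
        have mem: "(x, y) \<in> ?S" using xs by simp
        have eq: "?h (x, y) = z" using zz beq[OF F slit_nz2[OF xs(1)] slit_nz2[OF xs(2)]] by simp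
        show "z \<in> ?h ` ?S" by (rule rev_image_eqI[OF mem]) (use eq in simp)
      qed
    qed
  qed
qed

lemma open_U: "openin (top_of_set surfaceF) setU"
proof -
  have eq: "setU = surfaceF \<inter> {z. fst z \<notin> complex_of_real ` {..0}}" by (auto simp: setU_def)
  have o: "open {z::complex\<times>complex\<times>complex. fst z \<notin> complex_of_real ` {..0}}"
    by (rule open_not_slit) (auto intro: continuous_intros)
  have "openin (top_of_set surfaceF) (surfaceF \<inter> {z. fst z \<notin> complex_of_real ` {..0}})"
    by (rule openin_open_Int[OF o])
  then show ?thesis by (simp only: eq)
qed

lemma open_V: "openin (top_of_set surfaceF) setV"
proof -
  have eq: "setV = surfaceF \<inter> ({z. fst z \<notin> complex_of_real ` {1..}} \<inter> {z. 1 + fst (snd z) * fst z \<notin> complex_of_real ` {..0}})"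
    by (auto simp: setV_def)
  have o1: "open {z::complex\<times>complex\<times>complex. fst z \<notin> complex_of_real ` {1..}}"
    by (rule open_not_slit) (auto intro: continuous_intros)
  have o2: "open {z::complex\<times>complex\<times>complex. 1 + fst (snd z) * fst z \<notin> complex_of_real ` {..0}}"
    by (rule open_not_slit) (auto intro: continuous_intros)
  have "openin (top_of_set surfaceF) (surfaceF \<inter> ({z. fst z \<notin> complex_of_real ` {1..}} \<inter> {z. 1 + fst (snd z) * fst z \<notin> complex_of_real ` {..0}}))"
    by (rule openin_open_Int[OF open_Int[OF o1 o2]])
  then show ?thesis by (simp only: eq)
qed

lemma open_W: "openin (top_of_set surfaceF) setW"
proof -
  have eq: "setW = surfaceF \<inter> ({z. fst z \<notin> complex_of_real ` {0..}} \<inter> {z. snd (snd z) \<notin> complex_of_real ` {0..}})"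
    by (auto simp: setW_def)
  have o1: "open {z::complex\<times>complex\<times>complex. fst z \<notin> complex_of_real ` {0..}}"
    by (rule open_not_slit) (auto intro: continuous_intros)
  have o2: "open {z::complex\<times>complex\<times>complex. snd (snd z) \<notin> complex_of_real ` {0..}}"
    by (rule open_not_slit) (auto intro: continuous_intros)
  have "openin (top_of_set surfaceF) (surfaceF \<inter> ({z. fst z \<notin> complex_of_real ` {0..}} \<inter> {z. snd (snd z) \<notin> complex_of_real ` {0..}}))"
    by (rule openin_open_Int[OF open_Int[OF o1 o2]])
  then show ?thesis by (simp only: eq)
qed

lemma pc_UV: "path_connected (setU \<inter> setV)"
proof -
  let ?D = "- complex_of_real ` ({..0} \<union> {1..})"
  let ?Sl = "- complex_of_real ` {..0}"
  let ?m = "\<lambda>p::complex\<times>complex. (fst p, (snd p - 1) / fst p, (1 - fst p) / snd p)"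
  have pD: "path_connected ?D"
    by (rule simply_connected_imp_path_connected[OF simply_connected_doubly_slotted_complex_plane]) simp
  have pS: "path_connected ?Sl"
    by (rule simply_connected_imp_path_connected[OF simply_connected_slotted_complex_plane_left])
  have Dnz: "fst p \<noteq> 0" if "p \<in> ?D \<times> ?Sl" for p
    using that slit_nz[of "fst p"] by (auto simp: image_Un)
  have Snz: "snd p \<noteq> 0" if "p \<in> ?D \<times> ?Sl" for p
    using that slit_nz[of "snd p"] by auto
  have cont: "continuous_on (?D \<times> ?Sl) ?m"
    using Dnz Snz by (intro continuous_intros) auto
  have img: "?m ` (?D \<times> ?Sl) = setU \<inter> setV"
  proof
    show "?m ` (?D \<times> ?Sl) \<subseteq> setU \<inter> setV"
    proof
      fix z assume "z \<in> ?m ` (?D \<times> ?Sl)"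
      then obtain x A where p: "(x,A) \<in> ?D \<times> ?Sl" "z = ?m (x,A)" by auto
      have x0: "x \<noteq> 0" using Dnz[OF p(1)] by simp
      have A0: "A \<noteq> 0" using Snz[OF p(1)] by simp
      have xs: "x \<notin> complex_of_real ` {..0}" "x \<notin> complex_of_real ` {1..}" using p(1) by (auto simp: image_Un)
      have As: "A \<notin> complex_of_real ` {..0}" using p(1) by auto
      have e1: "1 + ((A - 1) / x) * x = A" using x0 by simp
      have g: "\<And>y b. x + y + x * b * y = x + (1 + b*x) * y" by (simp add: algebra_simps)
      have e2: "A * ((1 - x) / A) = 1 - x" using A0 by simp
      have "x + (1 - x) / A + x * ((A - 1) / x) * ((1 - x) / A) = x + (1 + ((A - 1) / x) * x) * ((1 - x) / A)"
        by (rule g)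
      also have "\<dots> = x + A * ((1 - x) / A)" by (simp only: e1)
      also have "\<dots> = 1" by (simp only: e2) simp
      finally have F: "x + (1 - x) / A + x * ((A - 1) / x) * ((1 - x) / A) = 1" .
      have "?m (x,A) \<in> setU \<inter> setV" unfolding setU_def setV_def
        using F xs As e1 by (simp add: mem_F)
      then show "z \<in> setU \<inter> setV" using p(2) by simp
    qed
    show "setU \<inter> setV \<subseteq> ?m ` (?D \<times> ?Sl)"
    proof
      fix z assume z: "z \<in> setU \<inter> setV"
      obtain x b y where zz: "z = (x,b,y)" by (cases z) auto
      have F: "x + y + x*b*y = 1" and xs: "x \<notin> complex_of_real ` {..0}" "x \<notin> complex_of_real ` {1..}"
        and As: "1 + b*x \<notin> complex_of_real ` {..0}"
        using z zz by (auto simp: setU_def setV_def mem_F)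
      have x0: "x \<noteq> 0" using slit_nz[OF xs(1)] .
      have mem: "(x, 1 + b*x) \<in> ?D \<times> ?Sl" using xs As by (auto simp: image_Un)
      have yv: "(1 - x) / (1 + b*x) = y"
      proof -
        have "(1 + b*x) * y - (1 - x) = (x + y + x*b*y) - 1" by (simp add: algebra_simps)
        then have "(1 + b*x) * y = 1 - x" using F by simp
        then show ?thesis using slit_nz[OF As] by (simp add: divide_eq_eq mult.commute)
      qed
      have eq: "?m (x, 1 + b*x) = z" using zz yv x0 by simp
      show "z \<in> ?m ` (?D \<times> ?Sl)" by (rule rev_image_eqI[OF mem]) (use eq in simp)
    qed
  qed
  show ?thesis
    using path_connected_continuous_image[OF cont path_connected_Times[OF pD pS]] img by simp
qed

lemma real_of_Im0: "Im x = 0 \<Longrightarrow> x = complex_of_real (Re x)"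
  by (simp add: complex_eq_iff)

lemma Aeq: "x + y + x*b*y = 1 \<Longrightarrow> (1 + b*x) * y = 1 - (x::complex)"
proof -
  assume F: "x + y + x*b*y = 1"
  have "(1 + b*x) * y - (1 - x) = (x + y + x*b*y) - 1" by (simp add: algebra_simps)
  then show ?thesis using F by simp
qed

lemma pc_UVW: "path_connected ((setU \<union> setV) \<inter> setW)"
proof -
  let ?Sr = "- complex_of_real ` {0..}"
  let ?P1 = "{x. 0 < Im x} \<times> ?Sr" and ?P2 = "{x. Im x < 0} \<times> ?Sr"
  let ?P3 = "?Sr \<times> {x. 0 < Im x}" and ?P4 = "?Sr \<times> {x. Im x < 0}"
  let ?P = "((?P1 \<union> ?P3) \<union> ?P2) \<union> ?P4"
  let ?h = "\<lambda>p::complex\<times>complex. (fst p, (1 - fst p - snd p) / (fst p * snd p), snd p)"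
  have pSr: "path_connected ?Sr"
    by (rule simply_connected_imp_path_connected[OF simply_connected_slotted_complex_plane_right])
  have pu: "path_connected {x::complex. 0 < Im x}"
    by (rule convex_imp_path_connected[OF convex_halfspace_Im_gt])
  have pl: "path_connected {x::complex. Im x < 0}"
    by (rule convex_imp_path_connected[OF convex_halfspace_Im_lt])
  have iS: "\<i> \<in> ?Sr" "- \<i> \<in> ?Sr" by (auto simp: of_real_img_iff)
  have pP: "path_connected ?P"
  proof (intro path_connected_Un path_connected_Times pSr pu pl)
    have "(\<i>,\<i>) \<in> ?P1 \<inter> ?P3" using iS by simp
    then show "?P1 \<inter> ?P3 \<noteq> {}" by blast
    have "(-\<i>,\<i>) \<in> (?P1 \<union> ?P3) \<inter> ?P2" using iS by simp
    then show "(?P1 \<union> ?P3) \<inter> ?P2 \<noteq> {}" by blast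
    have "(\<i>,-\<i>) \<in> (?P1 \<union> ?P3 \<union> ?P2) \<inter> ?P4" using iS by simp
    then show "(?P1 \<union> ?P3 \<union> ?P2) \<inter> ?P4 \<noteq> {}" by blast
  qed
  have cont: "continuous_on ?P ?h"
  proof -
    have "?P \<subseteq> ?Sr \<times> ?Sr" by auto
    moreover have "continuous_on (?Sr \<times> ?Sr) ?h" using slit_nz2 by (intro continuous_intros) auto
    ultimately show ?thesis using continuous_on_subset by blast
  qed
  have img: "?h ` ?P = (setU \<union> setV) \<inter> setW"
  proof
    show "?h ` ?P \<subseteq> (setU \<union> setV) \<inter> setW"
    proof
      fix z assume "z \<in> ?h ` ?P"
      then obtain x y where p: "(x,y) \<in> ?P" "z = ?h (x,y)" by auto
      have xs: "x \<notin> complex_of_real ` {0..}" "y \<notin> complex_of_real ` {0..}" using p(1) by auto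
      have im: "Im x \<noteq> 0 \<or> Im y \<noteq> 0" using p(1) by auto
      have x0: "x \<noteq> 0" and y0: "y \<noteq> 0" using slit_nz2 xs by auto
      let ?b = "(1 - x - y) / (x*y)"
      have F: "x + y + x * ?b * y = 1" by (rule hW_in_F[OF x0 y0])
      have inW: "(x, ?b, y) \<in> setW" unfolding setW_def using xs F by (simp add: mem_F)
      have "(x, ?b, y) \<in> setU \<union> setV"
      proof (cases "Im x = 0")
        case False
        then have "x \<notin> complex_of_real ` {..0}" by (simp add: of_real_img_iff)
        then show ?thesis using F unfolding setU_def by (simp add: mem_F)
      next
        case True
        then have iy: "Im y \<noteq> 0" using im by simp
        have rx: "Re x < 0" using True xs(1) by (auto simp: of_real_img_iff)
        have x1: "x \<notin> complex_of_real ` {1..}" using rx by (auto simp: of_real_img_iff)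
        have eA: "(1 + ?b * x) * y = 1 - x" by (rule Aeq[OF F])
        have A: "1 + ?b * x \<notin> complex_of_real ` {..0}"
        proof
          assume "1 + ?b * x \<in> complex_of_real ` {..0}"
          then obtain r where r: "1 + ?b * x = complex_of_real r" by auto
          have r0: "r \<noteq> 0"
          proof
            assume "r = 0"
            then have "1 - x = 0" using eA r by simp
            then show False using rx by (simp add: complex_eq_iff)
          qed
          have xr: "x = complex_of_real (Re x)" using real_of_Im0[OF True] .
          have "y = (1 - x) / complex_of_real r" using eA r r0 by (simp add: eq_divide_eq mult.commute)
          also have "\<dots> = complex_of_real ((1 - Re x) / r)" by (subst xr) simp
          finally have "Im y = 0" by simp
          then show False using iy by simp
        qed
        show ?thesis using F x1 A unfolding setV_def by (simp add: mem_F)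
      qed
      then have "(x, ?b, y) \<in> (setU \<union> setV) \<inter> setW" using inW by blast
      then show "z \<in> (setU \<union> setV) \<inter> setW" using p(2) by simp
    qed
    show "(setU \<union> setV) \<inter> setW \<subseteq> ?h ` ?P"
    proof
      fix z assume z: "z \<in> (setU \<union> setV) \<inter> setW"
      obtain x b y where zz: "z = (x,b,y)" by (cases z) auto
      have F: "x + y + x*b*y = 1" and xs: "x \<notin> complex_of_real ` {0..}" "y \<notin> complex_of_real ` {0..}"
        using z zz by (auto simp: setW_def mem_F)
      have UV: "(x,b,y) \<in> setU \<union> setV" using z zz by simp
      have im: "Im x \<noteq> 0 \<or> Im y \<noteq> 0"
      proof (rule ccontr)
        assume "\<not> (Im x \<noteq> 0 \<or> Im y \<noteq> 0)"
        then have ix: "Im x = 0" and iy: "Im y = 0" by auto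
        have rx: "Re x < 0" using ix xs(1) by (auto simp: of_real_img_iff)
        have ry: "Re y < 0" using iy xs(2) by (auto simp: of_real_img_iff)
        have nU: "(x,b,y) \<notin> setU" using ix rx by (auto simp: setU_def of_real_img_iff)
        have eA: "(1 + b * x) * y = 1 - x"
        proof -
          have "(1 + b*x) * y - (1 - x) = (x + y + x*b*y) - 1" by (simp add: algebra_simps)
          then show ?thesis using F by simp
        qed
        have y0: "y \<noteq> 0" using ry by auto
        have "1 + b * x = (1 - x) / y" using eA y0 by (simp add: eq_divide_eq)
        also have "\<dots> = complex_of_real ((1 - Re x) / Re y)"
        proof -
          have "(1 - x) / y = (1 - complex_of_real (Re x)) / complex_of_real (Re y)"
            using real_of_Im0[OF ix] real_of_Im0[OF iy] by simp
          also have "\<dots> = complex_of_real ((1 - Re x) / Re y)" by simp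
          finally show ?thesis .
        qed
        finally have A: "1 + b * x = complex_of_real ((1 - Re x) / Re y)" .
        have "(1 - Re x) / Re y \<le> 0" using rx ry by (simp add: divide_nonneg_neg)
        then have "complex_of_real ((1 - Re x) / Re y) \<in> complex_of_real ` {..0}" by (intro imageI) simp
        then have "1 + b * x \<in> complex_of_real ` {..0}" by (subst A)
        then have nV: "(x,b,y) \<notin> setV" by (simp add: setV_def)
        show False using UV nU nV by blast
      qed
      have mem: "(x, y) \<in> ?P" using xs im by (auto simp: linorder_neq_iff)
      have eq: "?h (x, y) = z" using zz beq[OF F slit_nz2[OF xs(1)] slit_nz2[OF xs(2)]] by simp
      show "z \<in> ?h ` ?P" by (rule rev_image_eqI[OF mem]) (use eq in simp)
    qed
  qed
  have "path_connected (?h ` ?P)" by (rule path_connected_continuous_image[OF cont pP])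
  then show ?thesis by (simp only: img)
qed

lemma cover: "(setU \<union> setV) \<union> setW = surfaceF"
proof
  show "(setU \<union> setV) \<union> setW \<subseteq> surfaceF" by (auto simp: setU_def setV_def setW_def)
  show "surfaceF \<subseteq> (setU \<union> setV) \<union> setW"
  proof
    fix z assume z: "z \<in> surfaceF"
    obtain x b y where zz: "z = (x,b,y)" by (cases z) auto
    have F: "x + y + x*b*y = 1" using z zz by (simp add: mem_F)
    show "z \<in> (setU \<union> setV) \<union> setW"
    proof (rule ccontr)
      assume nz: "z \<notin> (setU \<union> setV) \<union> setW"
      have xU: "x \<in> complex_of_real ` {..0}" using nz z zz by (auto simp: setU_def)
      then have ix: "Im x = 0" and rx0: "Re x \<le> 0" by (auto simp: of_real_img_iff)
      have x1: "x \<notin> complex_of_real ` {1..}" using rx0 by (auto simp: of_real_img_iff)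
      have AV: "1 + b*x \<in> complex_of_real ` {..0}" using nz z zz x1 by (auto simp: setV_def)
      then have iA: "Im (1 + b*x) = 0" and rA0: "Re (1 + b*x) \<le> 0" by (auto simp: of_real_img_iff)
      have eA: "(1 + b * x) * y = 1 - x"
      proof -
        have "(1 + b*x) * y - (1 - x) = (x + y + x*b*y) - 1" by (simp add: algebra_simps)
        then show ?thesis using F by simp
      qed
      have A0: "1 + b*x \<noteq> 0"
      proof
        assume "1 + b*x = 0"
        then have "1 - x = 0" using eA by simp
        then show False using rx0 by (simp add: complex_eq_iff)
      qed
      have rA: "Re (1 + b*x) < 0" using rA0 A0 iA by (auto simp: complex_eq_iff)
      have x0: "x \<noteq> 0"
      proof
        assume "x = 0" then show False using rA by simp
      qed
      have rx: "Re x < 0" using rx0 x0 ix by (auto simp: complex_eq_iff)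
      have xW: "x \<notin> complex_of_real ` {0..}" using rx by (auto simp: of_real_img_iff)
      have "y = (1 - x) / (1 + b*x)" using eA A0 by (simp add: eq_divide_eq mult.commute)
      also have "\<dots> = complex_of_real ((1 - Re x) / Re (1 + b*x))"
      proof -
        have "(1 - x) / (1 + b*x) = (1 - complex_of_real (Re x)) / complex_of_real (Re (1 + b*x))"
          using real_of_Im0[OF ix] real_of_Im0[OF iA] by simp
        also have "\<dots> = complex_of_real ((1 - Re x) / Re (1 + b*x))" by simp
        finally show ?thesis .
      qed
      finally have yr: "y = complex_of_real ((1 - Re x) / Re (1 + b*x))" .
      have "(1 - Re x) / Re (1 + b*x) < 0" using rx rA by (simp add: divide_pos_neg)
      then have yW: "y \<notin> complex_of_real ` {0..}" using yr by (auto simp: of_real_img_iff)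
      have "z \<in> setW" using z zz xW yW by (simp add: setW_def)
      then show False using nz by blast
    qed
  qed
qed

lemma ne_UV: "setU \<inter> setV \<noteq> {}"
proof -
  have "(1/2, 0, 1/2) \<in> setU \<inter> setV"
    by (auto simp: setU_def setV_def mem_F of_real_img_iff)
  then show ?thesis by blast
qed

lemma ne_UVW: "(setU \<union> setV) \<inter> setW \<noteq> {}"
proof -
  have F: "\<i> + \<i> + \<i> * (-1 + 2*\<i>) * \<i> = 1" by (simp add: complex_eq_iff)
  have "(\<i>, -1 + 2*\<i>, \<i>) \<in> setU \<inter> setW"
    using F by (auto simp: setU_def setW_def mem_F of_real_img_iff)
  then show ?thesis by blast
qed



theorem lemma2:
  shows "path_connected surfaceF \<and> simply_connected surfaceF"
proof -
  have oU: "openin (top_of_set (setU \<union> setV)) setU"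
    by (rule openin_subset_trans[OF open_U]) (use cover in auto)
  have oV: "openin (top_of_set (setU \<union> setV)) setV"
    by (rule openin_subset_trans[OF open_V]) (use cover in auto)
  have s1: "simply_connected (setU \<union> setV)"
    by (rule vk_simply_connected[OF oU oV sc_U sc_V pc_UV ne_UV])
  have oUV: "openin (top_of_set surfaceF) (setU \<union> setV)"
    by (rule openin_Un[OF open_U open_V])
  have oUV': "openin (top_of_set ((setU \<union> setV) \<union> setW)) (setU \<union> setV)"
    using oUV cover by simp
  have oW': "openin (top_of_set ((setU \<union> setV) \<union> setW)) setW"
    using open_W cover by simp
  have "simply_connected ((setU \<union> setV) \<union> setW)"
    by (rule vk_simply_connected[OF oUV' oW' s1 sc_W pc_UVW ne_UVW])
  then have sc: "simply_connected surfaceF" using cover by simp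
  then show ?thesis using simply_connected_imp_path_connected by blast
qed

end
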